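(* For $n\ge 1$, let $G_n$ denote the collection of all spiro chains with $n$ hexagons, one for each sequence of attachment choices (ortho/meta/para) at steps $3,\dots,n$ (so $|G_n|=3^{\max(n-2,0)}$, counted with multiplicity). Then \[ \mathrm{STN}_{avr}(G_n):=\frac{1}{|G_n|}\sum_{G\in G_n}\mathrm{STN}(G)=\frac{900}{361}\Big(\frac{41}{3}\Big)^n+\frac{130}{38}n-\frac{539}{361}. \]
   Context: For a graph $G$, $\mathrm{STN}(G)$ is the number of nonempty subtrees of $G$ (subgraphs that are trees, single vertices included). A spiro chain with $n$ hexagons consists of hexagons (6-cycles) $H_1,\dots,H_n$ such that $H_i$ and $H_{i+1}$ share exactly one vertex (a cut vertex), non-consecutive hexagons are vertex-disjoint, and the graph is the union of the hexagons. It is built by stepwise addition of terminal hexagons: for $n\le 2$ it is unique, and at each step $i=3,\dots,n$ the new hexagon $H_i$ is attached at a vertex of $H_{i-1}$ at distance $1$ (ortho), $2$ (meta) or $3$ (para) from the cut vertex shared by $H_{i-1}$ and $H_{i-2}$. *)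

theory Defs
  imports Complex_Main
begin

(* A graph is a pair (V, E) with E a set of 2-element subsets of V. *)
type_synonym 'a graph = "'a set \<times> 'a set set"

definition connected_graph :: "'a graph \<Rightarrow> bool" where
  "connected_graph G \<longleftrightarrow>
     (\<forall>u\<in>fst G. \<forall>v\<in>fst G. (\<lambda>x y. {x, y} \<in> snd G)\<^sup>*\<^sup>* u v)"

definition is_cycle :: "'a graph \<Rightarrow> 'a list \<Rightarrow> bool" where
  "is_cycle G vs \<longleftrightarrow> length vs \<ge> 3 \<and> distinct vs \<and> set vs \<subseteq> fst G \<and>
     (\<forall>i<length vs. {vs ! i, vs ! ((i + 1) mod length vs)} \<in> snd G)"

definition acyclic_graph :: "'a graph \<Rightarrow> bool" where
  "acyclic_graph G \<longleftrightarrow> \<not> (\<exists>vs. is_cycle G vs)"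

definition is_subgraph :: "'a graph \<Rightarrow> 'a graph \<Rightarrow> bool" where
  "is_subgraph H G \<longleftrightarrow> fst H \<subseteq> fst G \<and> snd H \<subseteq> snd G \<and> (\<forall>e\<in>snd H. e \<subseteq> fst H)"

definition is_tree :: "'a graph \<Rightarrow> bool" where
  "is_tree T \<longleftrightarrow> fst T \<noteq> {} \<and> connected_graph T \<and> acyclic_graph T"

definition STN :: "'a graph \<Rightarrow> nat" where
  "STN G = card {T. is_subgraph T G \<and> is_tree T}"

(* Hexagon H_i (1 \<le> i \<le> n) has local positions 0..5 in cyclic order.
   For i \<ge> 2, position 0 of H_i is the cut vertex shared with H_(i-1).
   The choice list cs (length n-2, entries in {1,2,3}) has cs!(i-3) = the distance
   (1 ortho, 2 meta, 3 para) at step i, i.e. H_i is attached to the vertex of H_(i-1)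
   at local position cs!(i-3) (distance from position 0).
   outpos cs j = position of H_j shared with H_(j+1).  For j = 1 the choice is
   immaterial (the chain with \<le> 2 hexagons is unique); we fix position 3. *)
definition outpos :: "nat list \<Rightarrow> nat \<Rightarrow> nat" where
  "outpos cs j = (if j = 1 then 3 else cs ! (j - 2))"

definition spiro_vtx :: "nat list \<Rightarrow> nat \<Rightarrow> nat \<Rightarrow> nat \<times> nat" where
  "spiro_vtx cs i k = (if 2 \<le> i \<and> k = 0 then (i - 1, outpos cs (i - 1)) else (i, k))"

definition spiro_chain :: "nat \<Rightarrow> nat list \<Rightarrow> (nat \<times> nat) graph" where
  "spiro_chain n cs =
     ({spiro_vtx cs i k | i k. 1 \<le> i \<and> i \<le> n \<and> k < 6},
      {{spiro_vtx cs i k, spiro_vtx cs i ((k + 1) mod 6)} | i k. 1 \<le> i \<and> i \<le> n \<and> k < 6})"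

definition spiro_choices :: "nat \<Rightarrow> nat list set" where
  "spiro_choices n = {cs. length cs = n - 2 \<and> set cs \<subseteq> {1, 2, 3}}"

definition STN_avr :: "nat \<Rightarrow> real" where
  "STN_avr n = (\<Sum>cs\<in>spiro_choices n. real (STN (spiro_chain n cs))) / real (card (spiro_choices n))"

end

theory Submission
  imports Defs
begin


definition Sub :: "'a graph \<Rightarrow> 'a graph set" where
  "Sub G = {T. is_subgraph T G \<and> is_tree T}"

definition Subv :: "'a graph \<Rightarrow> 'a \<Rightarrow> 'a graph set" where
  "Subv G v = {T \<in> Sub G. v \<in> fst T}"

definition Subn :: "'a graph \<Rightarrow> 'a \<Rightarrow> 'a graph set" where
  "Subn G v = {T \<in> Sub G. v \<notin> fst T}"

definition gunion :: "'a graph \<Rightarrow> 'a graph \<Rightarrow> 'a graph" where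
  "gunion A B = (fst A \<union> fst B, snd A \<union> snd B)"

definition adj :: "'a set set \<Rightarrow> 'a \<Rightarrow> 'a \<Rightarrow> bool" where
  "adj E x y \<longleftrightarrow> {x, y} \<in> E"

lemma adj_sym: "adj E x y = adj E y x"
  unfolding adj_def by (simp add: insert_commute)

lemma adj_rtrancl_sym: "(adj E)\<^sup>*\<^sup>* x y \<Longrightarrow> (adj E)\<^sup>*\<^sup>* y x"
proof (induction rule: rtranclp_induct)
  case base then show ?case by simp
next
  case (step y z)
  then show ?case using adj_sym by (metis converse_rtranclp_into_rtranclp)
qed

lemma connected_graph_adj: "connected_graph G \<longleftrightarrow> (\<forall>u\<in>fst G. \<forall>v\<in>fst G. (adj (snd G))\<^sup>*\<^sup>* u v)"
  unfolding connected_graph_def adj_def by simp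

lemma connected_via:
  assumes "v \<in> fst G" "\<And>u. u \<in> fst G \<Longrightarrow> (adj (snd G))\<^sup>*\<^sup>* u v"
  shows "connected_graph G"
  unfolding connected_graph_adj
  using assms adj_rtrancl_sym by (metis rtranclp_trans)

lemma acyclic_mono:
  assumes "acyclic_graph G" "fst H \<subseteq> fst G" "snd H \<subseteq> snd G"
  shows "acyclic_graph H"
  using assms unfolding acyclic_graph_def is_cycle_def by blast

lemma subgraph_trans: "is_subgraph A B \<Longrightarrow> is_subgraph B C \<Longrightarrow> is_subgraph A C"
  unfolding is_subgraph_def by blast

lemma Sub_mono: "is_subgraph B C \<Longrightarrow> T \<in> Sub B \<Longrightarrow> T \<in> Sub C"
  unfolding Sub_def using subgraph_trans by blast

lemma finite_Sub:
  assumes "finite (fst G)" "finite (snd G)"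
  shows "finite (Sub G)"
proof -
  have "Sub G \<subseteq> Pow (fst G) \<times> Pow (snd G)"
    unfolding Sub_def is_subgraph_def by auto
  then show ?thesis using assms finite_subset by blast
qed

lemma change_point_aux:
  fixes i k L :: nat
  assumes "P i" "\<not> P ((i + k) mod L)" "0 < L" "i < L"
  shows "\<exists>a<L. P a \<and> \<not> P ((a + 1) mod L)"
  using assms(2)
proof (induction k)
  case 0
  then show ?case using assms(1,4) by simp
next
  case (Suc k)
  show ?case
  proof (cases "P ((i + k) mod L)")
    case True
    have "(((i + k) mod L) + 1) mod L = (i + Suc k) mod L" by (simp add: mod_Suc_eq)
    then show ?thesis using Suc.prems True assms(3) by (metis mod_less_divisor)
  next
    case False
    then show ?thesis using Suc.IH by blast
  qed
qed

lemma change_point: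
  fixes i j L :: nat
  assumes "P i" "\<not> P j" "i < L" "j < L"
  shows "\<exists>a<L. P a \<and> \<not> P ((a + 1) mod L)"
proof -
  have "(i + (j + L - i)) mod L = j" using assms by simp
  then show ?thesis using change_point_aux[of P i "j + L - i" L] assms by auto
qed

lemma side_lemma:
  assumes sub: "is_subgraph T (A \<union> B, EA \<union> EB)"
    and EAV: "\<And>e. e \<in> EA \<Longrightarrow> e \<subseteq> A" and EBV: "\<And>e. e \<in> EB \<Longrightarrow> e \<subseteq> B"
    and AB: "A \<inter> B \<subseteq> {v}" and nv: "v \<notin> fst T" and con: "connected_graph T"
    and u: "u \<in> fst T" "u \<in> A" and ne: "\<And>e. e \<in> EB \<Longrightarrow> e \<noteq> {}"
  shows "fst T \<subseteq> A \<and> snd T \<subseteq> EA"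
proof -
  have inT: "\<And>e. e \<in> snd T \<Longrightarrow> e \<subseteq> fst T" and sE: "snd T \<subseteq> EA \<union> EB"
    using sub unfolding is_subgraph_def by auto
  have step: "y \<in> A" if "x \<in> A" "adj (snd T) x y" for x y
  proof -
    have e: "{x, y} \<in> snd T" using that unfolding adj_def by simp
    then have xy: "x \<in> fst T" "y \<in> fst T" using inT by auto
    show ?thesis
    proof (cases "{x, y} \<in> EA")
      case True then show ?thesis using EAV by blast
    next
      case False
      then have "{x,y} \<in> EB" using e sE by blast
      then have "x \<in> B" using EBV by blast
      then have "x = v" using AB that(1) by blast
      then show ?thesis using nv xy by blast
    qed
  qed
  have VA: "fst T \<subseteq> A"
  proof
    fix w assume w: "w \<in> fst T"
    have "(adj (snd T))\<^sup>*\<^sup>* u w" using con u w unfolding connected_graph_adj by blast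
    then show "w \<in> A"
      by (induction rule: rtranclp_induct) (use u step in auto)
  qed
  have "snd T \<subseteq> EA"
  proof
    fix e assume e: "e \<in> snd T"
    show "e \<in> EA"
    proof (rule ccontr)
      assume "e \<notin> EA"
      then have "e \<in> EB" using e sE by blast
      then have "e \<subseteq> A \<inter> B" "e \<noteq> {}" using EBV ne inT[OF e] VA by auto
      then have "v \<in> e" using AB by blast
      then show False using inT[OF e] nv by blast
    qed
  qed
  then show ?thesis using VA by blast
qed

lemma restr_lemma:
  assumes sub: "is_subgraph T (A \<union> B, EA \<union> EB)" and tree: "is_tree T"
    and EAV: "\<And>e. e \<in> EA \<Longrightarrow> e \<subseteq> A" and EBV: "\<And>e. e \<in> EB \<Longrightarrow> e \<subseteq> B"
    and AB: "A \<inter> B \<subseteq> {v}" and vT: "v \<in> fst T" and vA: "v \<in> A"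
  shows "(fst T \<inter> A, snd T \<inter> EA) \<in> Sub (A, EA) \<and> v \<in> fst (fst T \<inter> A, snd T \<inter> EA)"
proof -
  have inT: "\<And>e. e \<in> snd T \<Longrightarrow> e \<subseteq> fst T" and sE: "snd T \<subseteq> EA \<union> EB"
    using sub unfolding is_subgraph_def by auto
  have con: "connected_graph T" and acy: "acyclic_graph T" using tree unfolding is_tree_def by auto
  have walk: "(adj (snd T \<inter> EA))\<^sup>*\<^sup>* x v" if "(adj (snd T))\<^sup>*\<^sup>* x v" "x \<in> A" for x
    using that
  proof (induction rule: converse_rtranclp_induct)
    case base then show ?case by simp
  next
    case (step x y)
    show ?case
    proof (cases "x = v")
      case True then show ?thesis by simp
    next
      case False
      have e: "{x, y} \<in> snd T" using step.hyps(1) unfolding adj_def by simp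
      have "{x, y} \<in> EA"
      proof (rule ccontr)
        assume "{x, y} \<notin> EA"
        then have "{x,y} \<in> EB" using e sE by blast
        then have "x \<in> B" using EBV by blast
        then show False using AB step.prems False by blast
      qed
      then have "y \<in> A" "adj (snd T \<inter> EA) x y" using EAV e unfolding adj_def by auto
      then show ?thesis using step.IH by (meson converse_rtranclp_into_rtranclp)
    qed
  qed
  have c: "connected_graph (fst T \<inter> A, snd T \<inter> EA)"
  proof (rule connected_via[where v = v])
    show "v \<in> fst (fst T \<inter> A, snd T \<inter> EA)" using vT vA by simp
    fix u assume "u \<in> fst (fst T \<inter> A, snd T \<inter> EA)"
    then have "u \<in> fst T" "u \<in> A" by auto
    then have "(adj (snd T))\<^sup>*\<^sup>* u v" using con vT unfolding connected_graph_adj by blast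
    then show "(adj (snd (fst T \<inter> A, snd T \<inter> EA)))\<^sup>*\<^sup>* u v" using walk \<open>u \<in> A\<close> by simp
  qed
  have a: "acyclic_graph (fst T \<inter> A, snd T \<inter> EA)"
    using acyclic_mono[OF acy] by auto
  have s: "is_subgraph (fst T \<inter> A, snd T \<inter> EA) (A, EA)"
    unfolding is_subgraph_def using inT EAV by auto
  show ?thesis using c a s vT vA unfolding Sub_def is_tree_def by auto
qed

locale glue =
  fixes V1 V2 :: "'a set" and E1 E2 :: "'a set set" and v :: 'a
  assumes E1V: "\<And>e. e \<in> E1 \<Longrightarrow> e \<subseteq> V1"
    and E2V: "\<And>e. e \<in> E2 \<Longrightarrow> e \<subseteq> V2"
    and inter: "V1 \<inter> V2 = {v}"
    and dbl: "\<And>e. e \<in> E1 \<union> E2 \<Longrightarrow> \<exists>x y. x \<noteq> y \<and> e = {x, y}"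
begin

lemma E12: "E1 \<inter> E2 = {}"
proof (rule ccontr)
  assume "E1 \<inter> E2 \<noteq> {}"
  then obtain e where e: "e \<in> E1" "e \<in> E2" by blast
  then have "e \<subseteq> {v}" using E1V E2V inter by blast
  moreover obtain x y where "x \<noteq> y" "e = {x,y}" using dbl e by blast
  ultimately show False by blast
qed

lemma cycle_split:
  assumes T1: "is_subgraph T1 (V1, E1)" and T2: "is_subgraph T2 (V2, E2)"
    and cyc: "is_cycle (gunion T1 T2) vs"
  shows "is_cycle T1 vs \<or> is_cycle T2 vs"
proof -
  define L where "L = length vs"
  define ed where "ed i = {vs ! i, vs ! ((i + 1) mod L)}" for i
  have L3: "L \<ge> 3" and dist: "distinct vs" and eds: "\<And>i. i < L \<Longrightarrow> ed i \<in> snd T1 \<union> snd T2"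
    using cyc unfolding is_cycle_def gunion_def L_def ed_def by auto
  have Lpos: "L > 0" using L3 by simp
  have vin: "\<And>i T. i < L \<Longrightarrow> ed i \<in> snd T \<Longrightarrow> is_subgraph T X \<Longrightarrow> vs ! i \<in> fst T" for X
    unfolding is_subgraph_def ed_def by blast
  show ?thesis
  proof (cases "\<forall>i<L. ed i \<in> snd T1")
    case True
    have "set vs \<subseteq> fst T1"
    proof
      fix x assume "x \<in> set vs"
      then obtain i where "i < L" "x = vs ! i" unfolding L_def by (metis in_set_conv_nth)
      then show "x \<in> fst T1" using True vin T1 by blast
    qed
    then have "is_cycle T1 vs" using True cyc unfolding is_cycle_def L_def ed_def by auto
    then show ?thesis by simp
  next
    case False
    then obtain j where j: "j < L" "ed j \<notin> snd T1" by blast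
    show ?thesis
    proof (cases "\<forall>i<L. ed i \<notin> snd T1")
      case True
      then have True2: "\<forall>i<L. ed i \<in> snd T2" using eds by blast
      have "set vs \<subseteq> fst T2"
      proof
        fix x assume "x \<in> set vs"
        then obtain i where "i < L" "x = vs ! i" unfolding L_def by (metis in_set_conv_nth)
        then show "x \<in> fst T2" using True2 vin T2 by blast
      qed
      then have "is_cycle T2 vs" using True2 cyc unfolding is_cycle_def L_def ed_def by auto
      then show ?thesis by simp
    next
      case False
      then obtain i where i: "i < L" "ed i \<in> snd T1" by blast
      obtain a where a: "a < L" "ed a \<in> snd T1" "ed ((a + 1) mod L) \<notin> snd T1"
        using change_point[of "\<lambda>i. ed i \<in> snd T1" i j L] i j by blast
      obtain b where b: "b < L" "ed b \<notin> snd T1" "ed ((b + 1) mod L) \<in> snd T1"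
        using change_point[of "\<lambda>i. ed i \<notin> snd T1" j i L] i j by blast
      have ab: "a \<noteq> b" using a b by blast
      have key: "vs ! ((c + 1) mod L) = v" if "c < L" "ed c \<in> snd T1 \<and> ed ((c + 1) mod L) \<notin> snd T1 \<or>
          ed c \<notin> snd T1 \<and> ed ((c + 1) mod L) \<in> snd T1" for c
      proof -
        have c1: "(c + 1) mod L < L" using Lpos by simp
        have e1: "ed c \<in> E1 \<and> ed ((c + 1) mod L) \<in> E2 \<or> ed c \<in> E2 \<and> ed ((c + 1) mod L) \<in> E1"
          using that eds[OF c1] eds[OF that(1)] T1 T2 unfolding is_subgraph_def by auto
        have "vs ! ((c + 1) mod L) \<in> ed c" "vs ! ((c + 1) mod L) \<in> ed ((c + 1) mod L)"
          unfolding ed_def by auto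
        then have "vs ! ((c + 1) mod L) \<in> V1 \<inter> V2" using e1 E1V E2V by blast
        then show ?thesis using inter by blast
      qed
      have "vs ! ((a + 1) mod L) = vs ! ((b + 1) mod L)" using key[of a] key[of b] a b by auto
      then have "(a + 1) mod L = (b + 1) mod L"
        using dist Lpos unfolding L_def by (simp add: nth_eq_iff_index_eq)
      then have "a = b" using a(1) b(1)
        by (auto simp: mod_Suc split: if_splits)
      then show ?thesis using ab by blast
    qed
  qed
qed

lemma ne1: "e \<in> E1 \<Longrightarrow> e \<noteq> {}" and ne2: "e \<in> E2 \<Longrightarrow> e \<noteq> {}"
  using dbl by blast+

lemma vV1: "v \<in> V1" and vV2: "v \<in> V2" using inter by auto

lemma nov:
  assumes "T \<in> Sub (V1 \<union> V2, E1 \<union> E2)" "v \<notin> fst T"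
  shows "T \<in> Subn (V1, E1) v \<or> T \<in> Subn (V2, E2) v"
proof -
  have sub: "is_subgraph T (V1 \<union> V2, E1 \<union> E2)" and tr: "is_tree T" using assms unfolding Sub_def by auto
  then obtain u where u: "u \<in> fst T" unfolding is_tree_def by blast
  have con: "connected_graph T" using tr unfolding is_tree_def by auto
  have inT: "\<And>e. e \<in> snd T \<Longrightarrow> e \<subseteq> fst T" using sub unfolding is_subgraph_def by auto
  have "u \<in> V1 \<or> u \<in> V2" using u sub unfolding is_subgraph_def by auto
  then show ?thesis
  proof
    assume "u \<in> V1"
    then have "fst T \<subseteq> V1 \<and> snd T \<subseteq> E1"
      using side_lemma[OF sub E1V E2V _ assms(2) con u] inter ne2 by blast
    then show ?thesis using tr inT assms(2) unfolding Subn_def Sub_def is_subgraph_def by auto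
  next
    assume "u \<in> V2"
    have sub': "is_subgraph T (V2 \<union> V1, E2 \<union> E1)" using sub by (simp add: Un_commute)
    then have "fst T \<subseteq> V2 \<and> snd T \<subseteq> E2"
      using side_lemma[OF sub' E2V E1V _ assms(2) con u(1) \<open>u \<in> V2\<close>] inter ne1 by blast
    then show ?thesis using tr inT assms(2) unfolding Subn_def Sub_def is_subgraph_def by auto
  qed
qed

lemma restr1:
  assumes "T \<in> Sub (V1 \<union> V2, E1 \<union> E2)" "v \<in> fst T"
  shows "(fst T \<inter> V1, snd T \<inter> E1) \<in> Subv (V1, E1) v"
  using restr_lemma[of T V1 V2 E1 E2 v] assms E1V E2V inter vV1 unfolding Sub_def Subv_def by auto

lemma restr2:
  assumes "T \<in> Sub (V1 \<union> V2, E1 \<union> E2)" "v \<in> fst T"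
  shows "(fst T \<inter> V2, snd T \<inter> E2) \<in> Subv (V2, E2) v"
proof -
  have "T \<in> Sub (V2 \<union> V1, E2 \<union> E1)" using assms(1) by (simp add: Un_commute)
  moreover have "V2 \<inter> V1 \<subseteq> {v}" using inter by auto
  ultimately show ?thesis
    using restr_lemma[of T V2 V1 E2 E1 v] assms E1V E2V vV2 unfolding Sub_def Subv_def by auto
qed

lemma union_tree:
  assumes "T1 \<in> Subv (V1, E1) v" "T2 \<in> Subv (V2, E2) v"
  shows "gunion T1 T2 \<in> Subv (V1 \<union> V2, E1 \<union> E2) v"
proof -
  have s1: "is_subgraph T1 (V1, E1)" and t1: "is_tree T1" and v1: "v \<in> fst T1"
    and s2: "is_subgraph T2 (V2, E2)" and t2: "is_tree T2" and v2: "v \<in> fst T2"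
    using assms unfolding Subv_def Sub_def by auto
  have sub: "is_subgraph (gunion T1 T2) (V1 \<union> V2, E1 \<union> E2)"
    using s1 s2 unfolding is_subgraph_def gunion_def by auto
  have con: "connected_graph (gunion T1 T2)"
  proof (rule connected_via[where v = v])
    show "v \<in> fst (gunion T1 T2)" using v1 unfolding gunion_def by simp
    fix u assume "u \<in> fst (gunion T1 T2)"
    then have "u \<in> fst T1 \<or> u \<in> fst T2" unfolding gunion_def by simp
    moreover have "adj (snd T1) \<le> adj (snd (gunion T1 T2))" "adj (snd T2) \<le> adj (snd (gunion T1 T2))"
      unfolding adj_def gunion_def by auto
    ultimately show "(adj (snd (gunion T1 T2)))\<^sup>*\<^sup>* u v"
      using t1 t2 v1 v2 unfolding is_tree_def connected_graph_adj
      by (meson rtranclp_mono predicate2D)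
  qed
  have acy: "acyclic_graph (gunion T1 T2)"
    unfolding acyclic_graph_def
  proof
    assume "\<exists>vs. is_cycle (gunion T1 T2) vs"
    then obtain vs where "is_cycle (gunion T1 T2) vs" by blast
    then have "is_cycle T1 vs \<or> is_cycle T2 vs" using cycle_split s1 s2 by blast
    then show False using t1 t2 unfolding is_tree_def acyclic_graph_def by blast
  qed
  show ?thesis using sub con acy v1 unfolding Subv_def Sub_def is_tree_def gunion_def by auto
qed

lemma restr_union1:
  assumes "T1 \<in> Subv (V1, E1) v" "T2 \<in> Subv (V2, E2) v"
  shows "(fst (gunion T1 T2) \<inter> V1, snd (gunion T1 T2) \<inter> E1) = T1"
proof -
  have s1: "is_subgraph T1 (V1, E1)" and v1: "v \<in> fst T1" and s2: "is_subgraph T2 (V2, E2)"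
    using assms unfolding Subv_def Sub_def by auto
  have "fst T2 \<inter> V1 \<subseteq> fst T1" using s2 v1 inter unfolding is_subgraph_def by auto
  moreover have "snd T2 \<inter> E1 = {}" using s2 E12 unfolding is_subgraph_def by auto
  ultimately show ?thesis using s1 unfolding gunion_def is_subgraph_def by (cases T1) auto
qed

lemma restr_union2:
  assumes "T1 \<in> Subv (V1, E1) v" "T2 \<in> Subv (V2, E2) v"
  shows "(fst (gunion T1 T2) \<inter> V2, snd (gunion T1 T2) \<inter> E2) = T2"
proof -
  have s2: "is_subgraph T2 (V2, E2)" and v2: "v \<in> fst T2" and s1: "is_subgraph T1 (V1, E1)"
    using assms unfolding Subv_def Sub_def by auto
  have "fst T1 \<inter> V2 \<subseteq> fst T2" using s1 v2 inter unfolding is_subgraph_def by auto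
  moreover have "snd T1 \<inter> E2 = {}" using s1 E12 unfolding is_subgraph_def by auto
  ultimately show ?thesis using s2 unfolding gunion_def is_subgraph_def by (cases T2) auto
qed

lemma gunion_inj: "inj_on (\<lambda>(A, B). gunion A B) (Subv (V1, E1) v \<times> Subv (V2, E2) v)"
proof (rule inj_onI)
  fix x y assume x: "x \<in> Subv (V1, E1) v \<times> Subv (V2, E2) v" and y: "y \<in> Subv (V1, E1) v \<times> Subv (V2, E2) v"
    and eq: "(\<lambda>(A, B). gunion A B) x = (\<lambda>(A, B). gunion A B) y"
  obtain a b where ab: "x = (a, b)" by (cases x)
  obtain c d where cd: "y = (c, d)" by (cases y)
  show "x = y" using restr_union1[of a b] restr_union2[of a b] restr_union1[of c d] restr_union2[of c d]
      x y eq ab cd by auto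
qed

lemma sub1: "is_subgraph (V1, E1) (V1 \<union> V2, E1 \<union> E2)"
  and sub2: "is_subgraph (V2, E2) (V1 \<union> V2, E1 \<union> E2)"
  unfolding is_subgraph_def using E1V E2V by auto

lemma Sub_glue:
  "Sub (V1 \<union> V2, E1 \<union> E2) = Subn (V1, E1) v \<union> Subn (V2, E2) v \<union>
     (\<lambda>(A, B). gunion A B) ` (Subv (V1, E1) v \<times> Subv (V2, E2) v)"
proof (rule set_eqI)
  fix T
  show "T \<in> Sub (V1 \<union> V2, E1 \<union> E2) \<longleftrightarrow> T \<in> Subn (V1, E1) v \<union> Subn (V2, E2) v \<union>
     (\<lambda>(A, B). gunion A B) ` (Subv (V1, E1) v \<times> Subv (V2, E2) v)"
  proof
    assume T: "T \<in> Sub (V1 \<union> V2, E1 \<union> E2)"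
    show "T \<in> Subn (V1, E1) v \<union> Subn (V2, E2) v \<union>
     (\<lambda>(A, B). gunion A B) ` (Subv (V1, E1) v \<times> Subv (V2, E2) v)"
    proof (cases "v \<in> fst T")
      case False then show ?thesis using nov T by blast
    next
      case True
      have sT: "fst T \<subseteq> V1 \<union> V2" "snd T \<subseteq> E1 \<union> E2" using T unfolding Sub_def is_subgraph_def by auto
      have "T = gunion (fst T \<inter> V1, snd T \<inter> E1) (fst T \<inter> V2, snd T \<inter> E2)"
        using sT unfolding gunion_def by (cases T) auto
      moreover have "((fst T \<inter> V1, snd T \<inter> E1), (fst T \<inter> V2, snd T \<inter> E2)) \<in> Subv (V1, E1) v \<times> Subv (V2, E2) v"
        using restr1[OF T True] restr2[OF T True] by blast
      ultimately have "T \<in> (\<lambda>(A, B). gunion A B) ` (Subv (V1, E1) v \<times> Subv (V2, E2) v)"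
        by (metis (no_types, lifting) case_prod_conv image_eqI)
      then show ?thesis by blast
    qed
  next
    assume "T \<in> Subn (V1, E1) v \<union> Subn (V2, E2) v \<union>
     (\<lambda>(A, B). gunion A B) ` (Subv (V1, E1) v \<times> Subv (V2, E2) v)"
    then show "T \<in> Sub (V1 \<union> V2, E1 \<union> E2)"
    proof (elim UnE)
      assume "T \<in> Subn (V1, E1) v" then show ?thesis using Sub_mono[OF sub1] unfolding Subn_def by blast
    next
      assume "T \<in> Subn (V2, E2) v" then show ?thesis using Sub_mono[OF sub2] unfolding Subn_def by blast
    next
      assume "T \<in> (\<lambda>(A, B). gunion A B) ` (Subv (V1, E1) v \<times> Subv (V2, E2) v)"
      then show ?thesis using union_tree unfolding Subv_def by auto
    qed
  qed
qed

lemma Subn_disj: "Subn (V1, E1) v \<inter> Subn (V2, E2) v = {}"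
proof -
  { fix T assume "T \<in> Subn (V1, E1) v" "T \<in> Subn (V2, E2) v"
    then have "fst T \<subseteq> V1 \<inter> V2" "fst T \<noteq> {}" "v \<notin> fst T"
      unfolding Subn_def Sub_def is_subgraph_def is_tree_def by auto
    then have False using inter by (metis subset_singletonD singletonI) }
  then show ?thesis by blast
qed

lemma card_glue:
  assumes fin: "finite V1" "finite V2" "finite E1" "finite E2"
  shows "card (Sub (V1 \<union> V2, E1 \<union> E2)) = card (Subn (V1, E1) v) + card (Subn (V2, E2) v)
    + card (Subv (V1, E1) v) * card (Subv (V2, E2) v)"
proof -
  have f1: "finite (Sub (V1, E1))" "finite (Sub (V2, E2))" using finite_Sub fin by auto
  then have fs: "finite (Subn (V1, E1) v)" "finite (Subn (V2, E2) v)" "finite (Subv (V1, E1) v)" "finite (Subv (V2, E2) v)"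
    unfolding Subn_def Subv_def by auto
  have d2: "(Subn (V1, E1) v \<union> Subn (V2, E2) v) \<inter> (\<lambda>(A, B). gunion A B) ` (Subv (V1, E1) v \<times> Subv (V2, E2) v) = {}"
    unfolding Subn_def Subv_def gunion_def by auto
  have "card (Sub (V1 \<union> V2, E1 \<union> E2)) = card (Subn (V1, E1) v \<union> Subn (V2, E2) v)
     + card ((\<lambda>(A, B). gunion A B) ` (Subv (V1, E1) v \<times> Subv (V2, E2) v))"
    unfolding Sub_glue using d2 fs by (intro card_Un_disjoint) auto
  also have "card (Subn (V1, E1) v \<union> Subn (V2, E2) v) = card (Subn (V1, E1) v) + card (Subn (V2, E2) v)"
    using Subn_disj fs by (intro card_Un_disjoint) auto
  also have "card ((\<lambda>(A, B). gunion A B) ` (Subv (V1, E1) v \<times> Subv (V2, E2) v)) =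
     card (Subv (V1, E1) v) * card (Subv (V2, E2) v)"
    using card_image[OF gunion_inj] card_cartesian_product by simp
  finally show ?thesis .
qed

lemma card_glue_w:
  assumes fin: "finite V1" "finite V2" "finite E1" "finite E2" and w: "w \<in> V2" "w \<noteq> v"
  shows "card {T \<in> Sub (V1 \<union> V2, E1 \<union> E2). w \<in> fst T} = card {T \<in> Subn (V2, E2) v. w \<in> fst T}
    + card (Subv (V1, E1) v) * card {T \<in> Subv (V2, E2) v. w \<in> fst T}"
proof -
  have f1: "finite (Sub (V1, E1))" "finite (Sub (V2, E2))" using finite_Sub fin by auto
  then have fs: "finite {T \<in> Subn (V2, E2) v. w \<in> fst T}" "finite (Subv (V1, E1) v)" "finite {T \<in> Subv (V2, E2) v. w \<in> fst T}"
    unfolding Subn_def Subv_def by auto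
  have wV1: "w \<notin> V1" using w inter by blast
  have n1: "w \<notin> fst T" if "T \<in> Subn (V1, E1) v" for T
    using that wV1 unfolding Subn_def Sub_def is_subgraph_def by auto
  have g: "w \<in> fst (gunion A B) \<longleftrightarrow> w \<in> fst B" if "A \<in> Subv (V1, E1) v" for A B
    using that wV1 unfolding Subv_def Sub_def is_subgraph_def gunion_def by auto
  have eq: "{T \<in> Sub (V1 \<union> V2, E1 \<union> E2). w \<in> fst T} = {T \<in> Subn (V2, E2) v. w \<in> fst T} \<union>
    (\<lambda>(A, B). gunion A B) ` (Subv (V1, E1) v \<times> {T \<in> Subv (V2, E2) v. w \<in> fst T})"
    unfolding Sub_glue using n1 g by fastforce
  have d2: "{T \<in> Subn (V2, E2) v. w \<in> fst T} \<inter> (\<lambda>(A, B). gunion A B) ` (Subv (V1, E1) v \<times> {T \<in> Subv (V2, E2) v. w \<in> fst T}) = {}"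
    unfolding Subn_def Subv_def gunion_def by auto
  have inj: "inj_on (\<lambda>(A, B). gunion A B) (Subv (V1, E1) v \<times> {T \<in> Subv (V2, E2) v. w \<in> fst T})"
    using gunion_inj by (rule inj_on_subset) auto
  show ?thesis unfolding eq
    using card_Un_disjoint[OF _ _ d2] fs card_image[OF inj] card_cartesian_product by simp
qed

end

lemma card_split:
  assumes "finite (fst G)" "finite (snd G)"
  shows "card (Sub G) = card (Subv G v) + card (Subn G v)"
proof -
  have "Sub G = Subv G v \<union> Subn G v" "Subv G v \<inter> Subn G v = {}" unfolding Subv_def Subn_def by auto
  then show ?thesis using finite_Sub[OF assms] unfolding Subv_def Subn_def
    by (metis (no_types, lifting) card_Un_disjoint finite_Un)
qed

definition seg :: "(nat \<Rightarrow> 'a) \<Rightarrow> nat \<Rightarrow> nat \<Rightarrow> 'a graph" where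
  "seg p s e = (p ` {s..e}, (\<lambda>i. {p i, p (Suc i)}) ` {s..<e})"

lemma no_cycle_small:
  assumes "card (fst G) \<le> 2" "finite (fst G)"
  shows "acyclic_graph G"
  unfolding acyclic_graph_def
proof
  assume "\<exists>vs. is_cycle G vs"
  then obtain vs where "3 \<le> length vs" "distinct vs" "set vs \<subseteq> fst G" unfolding is_cycle_def by blast
  then have "card (set vs) \<le> card (fst G)" "card (set vs) = length vs"
    using card_mono[OF assms(2)] distinct_card by auto
  then show False using assms \<open>3 \<le> length vs\<close> by linarith
qed

lemma single_tree: "({x}, {}) \<in> Sub ({x}, {})"
proof -
  have "connected_graph ({x}, {})" unfolding connected_graph_def by auto
  moreover have "acyclic_graph ({x}, {})" by (rule no_cycle_small) auto
  ultimately show ?thesis unfolding Sub_def is_tree_def is_subgraph_def by auto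
qed

lemma Sub_single: "Sub ({x}, {}) = {({x}, {})}"
proof -
  have "T = ({x}, {})" if "T \<in> Sub ({x}, {})" for T
  proof -
    obtain V E where VE: "T = (V, E)" by (cases T)
    have "V \<subseteq> {x}" "E = {}" "V \<noteq> {}" using that VE unfolding Sub_def is_subgraph_def is_tree_def by auto
    then show ?thesis using VE by (metis subset_singletonD)
  qed
  then have "Sub ({x}, {}) \<subseteq> {({x}, {})}" by blast
  moreover have "{({x}, {})} \<subseteq> Sub ({x}, {})" using single_tree by simp
  ultimately show ?thesis by (rule subset_antisym)
qed

lemma Sub_K2:
  assumes ab: "a \<noteq> b"
  shows "Sub ({a, b}, {{a, b}}) = {({a}, {}), ({b}, {}), ({a, b}, {{a, b}})}"
proof (rule set_eqI)
  fix T
  show "T \<in> Sub ({a, b}, {{a, b}}) \<longleftrightarrow> T \<in> {({a}, {}), ({b}, {}), ({a, b}, {{a, b}})}"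
  proof
    assume T: "T \<in> Sub ({a, b}, {{a, b}})"
    obtain V E where VE: "T = (V, E)" by (cases T)
    have s: "V \<subseteq> {a,b}" "E \<subseteq> {{a,b}}" "\<forall>e\<in>E. e \<subseteq> V" "V \<noteq> {}" "connected_graph (V, E)"
      using T VE unfolding Sub_def is_subgraph_def is_tree_def by auto
    show "T \<in> {({a}, {}), ({b}, {}), ({a, b}, {{a, b}})}"
    proof (cases "E = {}")
      case True
      have "V \<noteq> {a, b}"
      proof
        assume "V = {a, b}"
        then have "(\<lambda>x y. {x, y} \<in> E)\<^sup>*\<^sup>* a b" using s(5) unfolding connected_graph_def by auto
        then have "a = b" using True by (metis (no_types, lifting) empty_iff rtranclp.cases)
        then show False using ab by simp
      qed
      then have "V = {a} \<or> V = {b}" using s by blast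
      then show ?thesis using VE True by auto
    next
      case False
      then have "E = {{a,b}}" using s by blast
      then have "V = {a,b}" using s by auto
      then show ?thesis using VE \<open>E = {{a,b}}\<close> by auto
    qed
  next
    assume "T \<in> {({a}, {}), ({b}, {}), ({a, b}, {{a, b}})}"
    moreover have "({a, b}, {{a, b}}) \<in> Sub ({a, b}, {{a, b}})"
    proof -
      have "(\<lambda>x y. {x, y} \<in> {{a, b}})\<^sup>*\<^sup>* a b" "(\<lambda>x y. {x, y} \<in> {{a, b}})\<^sup>*\<^sup>* b a"
        by (auto simp: insert_commute)
      then have "connected_graph ({a, b}, {{a, b}})" unfolding connected_graph_def by auto
      moreover have "acyclic_graph ({a, b}, {{a, b}})" by (rule no_cycle_small) (auto simp: card_insert_if)
      ultimately show ?thesis unfolding Sub_def is_tree_def is_subgraph_def by auto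
    qed
    moreover have "({a}, {}) \<in> Sub ({a, b}, {{a, b}})" "({b}, {}) \<in> Sub ({a, b}, {{a, b}})"
      by (rule Sub_mono[OF _ single_tree], simp add: is_subgraph_def)+
    ultimately show "T \<in> Sub ({a, b}, {{a, b}})" by blast
  qed
qed



lemma seg_mem:
  assumes "inj_on p {..M}" "e \<le> M" "k \<le> M"
  shows "p k \<in> fst (seg p s e) \<longleftrightarrow> s \<le> k \<and> k \<le> e"
proof -
  have "p k \<in> p ` {s..e} \<longleftrightarrow> k \<in> {s..e}"
    using assms by (intro inj_on_image_mem_iff[of p "{..M}"]) auto
  then show ?thesis unfolding seg_def by simp
qed

lemma seg_split: "seg p 0 (Suc m) = (fst (seg p 0 m) \<union> {p m, p (Suc m)}, snd (seg p 0 m) \<union> {{p m, p (Suc m)}})"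
proof -
  have "{0..Suc m} = {0..m} \<union> {Suc m}" by auto
  moreover have "{0..<Suc m} = {0..<m} \<union> {m}" by auto
  ultimately show ?thesis unfolding seg_def by auto
qed

lemma seg_glue:
  assumes "inj_on p {..Suc m}"
  shows "glue (fst (seg p 0 m)) {p m, p (Suc m)} (snd (seg p 0 m)) {{p m, p (Suc m)}} (p m)"
proof
  fix e assume "e \<in> snd (seg p 0 m)" then show "e \<subseteq> fst (seg p 0 m)" unfolding seg_def by auto
next
  fix e assume "e \<in> {{p m, p (Suc m)}}" then show "e \<subseteq> {p m, p (Suc m)}" by auto
next
  have "p (Suc m) \<notin> p ` {0..m}" using assms by (subst inj_on_image_mem_iff[of p "{..Suc m}"]) auto
  then show "fst (seg p 0 m) \<inter> {p m, p (Suc m)} = {p m}" unfolding seg_def by auto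
next
  fix e assume e: "e \<in> snd (seg p 0 m) \<union> {{p m, p (Suc m)}}"
  have "e \<in> (\<lambda>i. {p i, p (Suc i)}) ` {0..<m} \<or> e = {p m, p (Suc m)}" using e unfolding seg_def by auto
  then have "\<exists>i\<le>m. e = {p i, p (Suc i)}"
  proof
    assume "e \<in> (\<lambda>i. {p i, p (Suc i)}) ` {0..<m}"
    then obtain i where "i < m" "e = {p i, p (Suc i)}" by auto
    then show ?thesis by (intro exI[of _ i]) auto
  qed auto
  then obtain i where i: "i \<le> m" "e = {p i, p (Suc i)}" by blast
  have "p i \<noteq> p (Suc i)" using assms i(1) by (metis atMost_iff inj_on_eq_iff le_SucI n_not_Suc_n Suc_le_mono)
  then show "\<exists>x y. x \<noteq> y \<and> e = {x, y}" using i by blast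
qed

lemma Sub_path:
  assumes "inj_on p {..m}"
  shows "Sub (seg p 0 m) = {seg p s e | s e. s \<le> e \<and> e \<le> m}"
  using assms
proof (induction m)
  case 0
  have "seg p 0 0 = ({p 0}, {})" unfolding seg_def by simp
  moreover have "{seg p s e | s e. s \<le> e \<and> e \<le> (0::nat)} = {seg p 0 0}" by auto
  ultimately show ?case using Sub_single by simp
next
  case (Suc m)
  have inj: "inj_on p {..Suc m}" by fact
  then have injm: "inj_on p {..m}" by (rule inj_on_subset) auto
  have IH: "Sub (seg p 0 m) = {seg p s e | s e. s \<le> e \<and> e \<le> m}" using Suc.IH injm by blast
  interpret g: glue "fst (seg p 0 m)" "{p m, p (Suc m)}" "snd (seg p 0 m)" "{{p m, p (Suc m)}}" "p m"
    using seg_glue[OF inj] .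
  have pne: "p m \<noteq> p (Suc m)" using inj by (metis atMost_iff inj_on_eq_iff le_SucI n_not_Suc_n order_refl)
  have memm: "p m \<in> fst (seg p s e) \<longleftrightarrow> s \<le> m \<and> m \<le> e" if "e \<le> Suc m" for s e
    using seg_mem[OF inj that, of m] by simp
  have Sn1: "Subn (seg p 0 m) (p m) = {seg p s e | s e. s \<le> e \<and> e < m}"
    unfolding Subn_def IH using memm by fastforce
  have Sv1: "Subv (seg p 0 m) (p m) = {seg p s m | s. s \<le> m}"
    unfolding Subv_def IH using memm by fastforce
  have K2: "Sub ({p m, p (Suc m)}, {{p m, p (Suc m)}}) = {({p m}, {}), ({p (Suc m)}, {}), ({p m, p (Suc m)}, {{p m, p (Suc m)}})}"
    using Sub_K2[OF pne] .
  have Sn2: "Subn ({p m, p (Suc m)}, {{p m, p (Suc m)}}) (p m) = {seg p (Suc m) (Suc m)}"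
    unfolding Subn_def K2 seg_def using pne by auto
  have Sv2: "Subv ({p m, p (Suc m)}, {{p m, p (Suc m)}}) (p m) = {({p m}, {}), ({p m, p (Suc m)}, {{p m, p (Suc m)}})}"
    unfolding Subv_def K2 using pne by auto
  have u1: "gunion (seg p s m) ({p m}, {}) = seg p s m" if "s \<le> m" for s
    using that unfolding gunion_def seg_def by auto
  have u2: "gunion (seg p s m) ({p m, p (Suc m)}, {{p m, p (Suc m)}}) = seg p s (Suc m)" if "s \<le> m" for s
  proof -
    have "{s..Suc m} = {s..m} \<union> {Suc m}" "{s..<Suc m} = {s..<m} \<union> {m}" using that by auto
    then show ?thesis using that unfolding gunion_def seg_def by auto
  qed
  have img: "(\<lambda>(A, B). gunion A B) ` ({seg p s m | s. s \<le> m} \<times> {({p m}, {}), ({p m, p (Suc m)}, {{p m, p (Suc m)}})})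
     = {seg p s m | s. s \<le> m} \<union> {seg p s (Suc m) | s. s \<le> m}"
    using u1 u2 by force
  have "Sub (seg p 0 (Suc m)) = {seg p s e | s e. s \<le> e \<and> e < m} \<union> {seg p (Suc m) (Suc m)} \<union>
      ({seg p s m | s. s \<le> m} \<union> {seg p s (Suc m) | s. s \<le> m})"
    unfolding seg_split g.Sub_glue prod.collapse Sn1 Sv1 Sn2 Sv2 img ..
  also have "\<dots> = {seg p s e | s e. s \<le> e \<and> e \<le> Suc m}"
  proof (rule set_eqI, rule iffI)
    fix x assume "x \<in> {seg p s e | s e. s \<le> e \<and> e < m} \<union> {seg p (Suc m) (Suc m)} \<union>
      ({seg p s m | s. s \<le> m} \<union> {seg p s (Suc m) | s. s \<le> m})"
    then show "x \<in> {seg p s e | s e. s \<le> e \<and> e \<le> Suc m}" by fastforce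
  next
    fix x assume "x \<in> {seg p s e | s e. s \<le> e \<and> e \<le> Suc m}"
    then obtain s e where x: "x = seg p s e" "s \<le> e" "e \<le> Suc m" by blast
    consider "e < m" | "e = m" | "e = Suc m \<and> s = Suc m" | "e = Suc m \<and> s \<le> m" using x by linarith
    then show "x \<in> {seg p s e | s e. s \<le> e \<and> e < m} \<union> {seg p (Suc m) (Suc m)} \<union>
      ({seg p s m | s. s \<le> m} \<union> {seg p s (Suc m) | s. s \<le> m})"
      by cases (use x in auto)
  qed
  finally show ?case .
qed



definition edg :: "(nat \<Rightarrow> 'a) \<Rightarrow> nat \<Rightarrow> 'a set" where
  "edg h k = {h k, h (Suc k mod 6)}"

definition hexG :: "(nat \<Rightarrow> 'a) \<Rightarrow> 'a graph" where
  "hexG h = (h ` {..<6}, edg h ` {..<6})"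

definition arcI :: "nat \<Rightarrow> nat \<Rightarrow> nat set \<times> nat set" where
  "arcI t l = (set (map (\<lambda>i. (t+i) mod 6) [0..<Suc l]), set (map (\<lambda>i. (t+i) mod 6) [0..<l]))"

definition arc :: "(nat \<Rightarrow> 'a) \<Rightarrow> nat \<Rightarrow> nat \<Rightarrow> 'a graph" where
  "arc h t l = (h ` fst (arcI t l), edg h ` snd (arcI t l))"

definition Idx :: "(nat \<times> nat) set" where "Idx = {..<6} \<times> {..<6}"

lemma seg_shift:
  assumes "s \<le> e"
  shows "seg p s e = seg (\<lambda>i. p (s + i)) 0 (e - s)"
proof -
  have A: "{s..e} = (\<lambda>i. s + i) ` {0..e - s}" using assms
    by (auto simp: image_iff intro!: bexI[where x="_ - s"])
  have B: "{s..<e} = (\<lambda>i. s + i) ` {0..<e - s}" using assms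
    by (auto simp: image_iff intro!: bexI[where x="_ - s"])
  show ?thesis unfolding seg_def A B image_image by simp
qed

lemma arc_seg: "arc h t l = seg (\<lambda>i. h ((t + i) mod 6)) 0 l"
proof -
  have "set (map (\<lambda>i. (t+i) mod 6) [0..<Suc l]) = (\<lambda>i. (t+i) mod 6) ` {0..l}"
    by (simp only: set_map set_upt atLeastLessThanSuc_atLeastAtMost)
  moreover have "set (map (\<lambda>i. (t+i) mod 6) [0..<l]) = (\<lambda>i. (t+i) mod 6) ` {0..<l}" by simp
  moreover have "edg h ((t + i) mod 6) = {h ((t + i) mod 6), h ((t + Suc i) mod 6)}" for i
    unfolding edg_def by (simp add: mod_Suc_eq)
  ultimately show ?thesis unfolding arc_def arcI_def seg_def by (simp add: image_image)
qed

lemma shift_inj: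
  fixes h :: "nat \<Rightarrow> 'b" and t :: nat
  assumes h: "inj_on h {..<6}" and t: "t < 6"
  shows "inj_on (\<lambda>i. h ((t + i) mod 6)) {..5}"
proof (rule inj_onI)
  fix i j assume ij: "i \<in> {..5}" "j \<in> {..5}" and eq: "h ((t + i) mod 6) = h ((t + j) mod 6)"
  have "(t + i) mod 6 = (t + j) mod 6" using inj_onD[OF h eq] by simp
  moreover have "t \<in> set [0..<6]" "i \<in> set [0..<6]" "j \<in> set [0..<6]" using ij t by auto
  moreover have fin: "\<forall>t\<in>set [0..<6]. \<forall>i\<in>set [0..<6]. \<forall>j\<in>set [0..<6]. (t + i) mod 6 = (t + j) mod (6::nat) \<longrightarrow> i = j"
    by code_simp
  ultimately show "i = j" by blast
qed

lemma hex_cycle: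
  fixes h :: "nat \<Rightarrow> 'b"
  assumes h: "inj_on h {..<6}" and T: "is_subgraph T (hexG h)" and all: "\<forall>k<6. edg h k \<in> snd T"
  shows "is_cycle T (map h [0..<6])"
proof -
  have d: "distinct (map h [0..<6])" using h by (simp add: distinct_map lessThan_atLeast0)
  have "h k \<in> fst T" if "k < 6" for k
    using all that T unfolding is_subgraph_def edg_def by blast
  then have s: "set (map h [0..<6]) \<subseteq> fst T" by auto
  have "{map h [0..<6] ! i, map h [0..<6] ! ((i + 1) mod length (map h [0..<6]))} \<in> snd T" if "i < 6" for i
    using all that unfolding edg_def by (simp add: nth_map)
  then show ?thesis unfolding is_cycle_def using d s by simp
qed

lemma Sub_hex:
  fixes h :: "nat \<Rightarrow> 'b"
  assumes h: "inj_on h {..<6}"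
  shows "Sub (hexG h) = (\<lambda>(t, l). arc h t l) ` Idx"
proof (rule set_eqI, rule iffI)
  fix T assume T: "T \<in> Sub (hexG h)"
  then have sub: "is_subgraph T (hexG h)" and tr: "is_tree T" unfolding Sub_def by auto
  have "\<not> (\<forall>k<6. edg h k \<in> snd T)"
    using hex_cycle[OF h sub] tr unfolding is_tree_def acyclic_graph_def by blast
  then obtain k where k: "k < 6" "edg h k \<notin> snd T" by blast
  define t where "t = Suc k mod 6"
  have t6: "t < 6" unfolding t_def by simp
  define q where "q i = h ((t + i) mod 6)" for i
  have qinj: "inj_on q {..5}" unfolding q_def using shift_inj[OF h t6] .
  have f1: "\<forall>t\<in>set [0..<6]. \<forall>j\<in>set [0..<6]. (t + (j + 6 - t) mod 6) mod 6 = j \<and> (j + 6 - t) mod 6 \<le> (5::nat)"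
    by code_simp
  have f2: "\<forall>k\<in>set [0..<6]. \<forall>j\<in>set [0..<6]. j \<noteq> k \<longrightarrow> (Suc k mod 6 + (j + 6 - Suc k mod 6) mod 6) mod 6 = j \<and> (j + 6 - Suc k mod 6) mod 6 < (5::nat)"
    by code_simp
  have vcov: "\<exists>i\<le>5. (t + i) mod 6 = j" if "j < 6" for j
  proof -
    have "t \<in> set [0..<6]" "j \<in> set [0..<6]" using that t6 by auto
    then show ?thesis using f1 by blast
  qed
  have ecov: "\<exists>i<5. (t + i) mod 6 = j" if "j < 6" "j \<noteq> k" for j
  proof -
    have "k \<in> set [0..<6]" "j \<in> set [0..<6]" using that k(1) by auto
    then show ?thesis using f2 that(2) unfolding t_def by blast
  qed
  have "is_subgraph T (seg q 0 5)"
    unfolding is_subgraph_def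
  proof (intro conjI)
    show "fst T \<subseteq> fst (seg q 0 5)"
    proof
      fix x assume "x \<in> fst T"
      then obtain j where j: "j < 6" "x = h j" using sub unfolding is_subgraph_def hexG_def by auto
      obtain i where "i \<le> 5" "(t + i) mod 6 = j" using vcov[OF j(1)] by blast
      then show "x \<in> fst (seg q 0 5)" unfolding seg_def q_def using j by auto
    qed
    show "snd T \<subseteq> snd (seg q 0 5)"
    proof
      fix e assume e: "e \<in> snd T"
      then obtain j where j: "j < 6" "e = edg h j" using sub unfolding is_subgraph_def hexG_def by auto
      have "j \<noteq> k" using e j k by blast
      then obtain i where i: "i < 5" "(t + i) mod 6 = j" using ecov[OF j(1)] by blast
      have "Suc (t + i) mod 6 = Suc ((t + i) mod 6) mod 6" by (simp add: mod_Suc_eq)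
      then have "e = {q i, q (Suc i)}" unfolding q_def j(2) edg_def using i by simp
      then show "e \<in> snd (seg q 0 5)" unfolding seg_def using i by auto
    qed
    show "\<forall>e\<in>snd T. e \<subseteq> fst T" using sub unfolding is_subgraph_def by auto
  qed
  then have "T \<in> Sub (seg q 0 5)" using tr unfolding Sub_def by auto
  then obtain s e where se: "T = seg q s e" "s \<le> e" "e \<le> 5" using Sub_path[OF qinj] by auto
  have "T = seg (\<lambda>i. q (s + i)) 0 (e - s)" using se seg_shift by simp
  also have "(\<lambda>i. q (s + i)) = (\<lambda>i. h (((t + s) mod 6 + i) mod 6))"
    unfolding q_def by (simp add: mod_add_left_eq add.assoc)
  finally have "T = arc h ((t + s) mod 6) (e - s)" using arc_seg by metis
  moreover have "((t + s) mod 6, e - s) \<in> Idx" unfolding Idx_def using se by auto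
  ultimately show "T \<in> (\<lambda>(t, l). arc h t l) ` Idx" by (metis (no_types, lifting) case_prod_conv image_eqI)
next
  fix T assume "T \<in> (\<lambda>(t, l). arc h t l) ` Idx"
  then obtain t l where tl: "T = arc h t l" "t < 6" "l < 6" unfolding Idx_def by auto
  define q where "q i = h ((t + i) mod 6)" for i
  have qinj: "inj_on q {..5}" unfolding q_def using shift_inj[OF h tl(2)] .
  have "T = seg q 0 l" using tl arc_seg unfolding q_def by metis
  moreover have "\<exists>s e. seg q 0 l = seg q s e \<and> s \<le> e \<and> e \<le> 5" using tl(3) by (intro exI[of _ 0] exI[of _ l]) simp
  ultimately have "T \<in> Sub (seg q 0 5)" unfolding Sub_path[OF qinj] by simp
  moreover have "is_subgraph (seg q 0 5) (hexG h)"
    unfolding is_subgraph_def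
  proof (intro conjI)
    show "fst (seg q 0 5) \<subseteq> fst (hexG h)" unfolding seg_def hexG_def q_def by auto
    show "snd (seg q 0 5) \<subseteq> snd (hexG h)"
    proof
      fix e assume "e \<in> snd (seg q 0 5)"
      then obtain i where "e = {q i, q (Suc i)}" unfolding seg_def by auto
      then have "e = edg h ((t + i) mod 6)" unfolding q_def edg_def by (simp add: mod_Suc_eq)
      then show "e \<in> snd (hexG h)" unfolding hexG_def by auto
    qed
    show "\<forall>e\<in>snd (seg q 0 5). e \<subseteq> fst (seg q 0 5)" unfolding seg_def by auto
  qed
  ultimately show "T \<in> Sub (hexG h)" using Sub_mono by blast
qed

lemma edg_inj:
  fixes h :: "nat \<Rightarrow> 'b"
  assumes h: "inj_on h {..<6}"
  shows "inj_on (edg h) {..<6}"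
proof (rule inj_onI)
  fix k k' assume kk: "k \<in> {..<6}" "k' \<in> {..<6}" "edg h k = edg h k'"
  have m: "Suc k mod 6 \<in> {..<6}" "Suc k' mod 6 \<in> {..<6}" by auto
  from kk(3) have "(h k = h k' \<and> h (Suc k mod 6) = h (Suc k' mod 6)) \<or> (h k = h (Suc k' mod 6) \<and> h (Suc k mod 6) = h k')"
    unfolding edg_def by (simp add: doubleton_eq_iff)
  then have "k = k' \<or> (k = Suc k' mod 6 \<and> Suc k mod 6 = k')"
    using h kk m by (auto dest: inj_onD)
  moreover have "k \<in> set [0..<6]" "k' \<in> set [0..<6]" using kk by auto
  moreover have "\<forall>k\<in>set [0..<6]. \<forall>k'\<in>set [0..<6]. \<not> (k = Suc k' mod 6 \<and> Suc k mod 6 = (k'::nat))"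
    by code_simp
  ultimately show "k = k'" by blast
qed

lemma arcI_sub: "fst (arcI t l) \<subseteq> {..<6}" "snd (arcI t l) \<subseteq> {..<6}"
  unfolding arcI_def by auto

lemma arc_inj:
  fixes h :: "nat \<Rightarrow> 'b"
  assumes h: "inj_on h {..<6}"
  shows "inj_on (\<lambda>(t, l). arc h t l) Idx"
proof -
  have d: "distinct (map (\<lambda>(t,l). arcI t l) (List.product [0..<6] [0..<6]))" by code_simp
  have I: "set (List.product [0..<6] [0..<6]) = Idx" unfolding Idx_def by auto
  have i1: "inj_on (\<lambda>(t,l). arcI t l) Idx" using d I by (simp add: distinct_map)
  show ?thesis
  proof (rule inj_onI)
    fix x y assume x: "x \<in> Idx" and y: "y \<in> Idx" and eq: "(\<lambda>(t, l). arc h t l) x = (\<lambda>(t, l). arc h t l) y"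
    obtain a b where ab: "x = (a, b)" by (cases x)
    obtain c d where cd: "y = (c, d)" by (cases y)
    have "arc h a b = arc h c d" using eq ab cd by simp
    then have "(h ` fst (arcI a b), edg h ` snd (arcI a b)) = (h ` fst (arcI c d), edg h ` snd (arcI c d))"
      unfolding arc_def .
    then have "h ` fst (arcI a b) = h ` fst (arcI c d) \<and> edg h ` snd (arcI a b) = edg h ` snd (arcI c d)"
      by (simp only: prod.inject)
    then have A: "fst (arcI a b) = fst (arcI c d)" and B: "snd (arcI a b) = snd (arcI c d)"
      using inj_on_image_eq_iff[OF h arcI_sub(1) arcI_sub(1), THEN iffD1]
        inj_on_image_eq_iff[OF edg_inj[OF h] arcI_sub(2) arcI_sub(2), THEN iffD1] by auto
    have "arcI a b = arcI c d" using A B by (rule prod_eqI)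
    then have "(\<lambda>(t,l). arcI t l) x = (\<lambda>(t,l). arcI t l) y" using ab cd by simp
    then show "x = y" using inj_onD[OF i1 _ x y] by simp
  qed
qed

lemma arc_mem:
  fixes h :: "nat \<Rightarrow> 'b"
  assumes h: "inj_on h {..<6}" and p: "p < 6"
  shows "h p \<in> fst (arc h t l) \<longleftrightarrow> p \<in> fst (arcI t l)"
  unfolding arc_def using inj_on_image_mem_iff[OF h _ arcI_sub(1)] p by auto

lemma card_hex:
  fixes h :: "nat \<Rightarrow> 'b"
  assumes h: "inj_on h {..<6}"
  shows "card {T \<in> Sub (hexG h). P T} = card {x \<in> Idx. P (arc h (fst x) (snd x))}"
proof -
  have F: "(\<lambda>(t, l). arc h t l) = (\<lambda>x. arc h (fst x) (snd x))" by (simp add: case_prod_beta')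
  have G: "{y \<in> f ` A. P y} = f ` {x \<in> A. P (f x)}" for f :: "nat \<times> nat \<Rightarrow> 'b graph" and A by auto
  have "{T \<in> Sub (hexG h). P T} = (\<lambda>(t, l). arc h t l) ` {x \<in> Idx. P (arc h (fst x) (snd x))}"
    unfolding Sub_hex[OF h] F G ..
  moreover have "inj_on (\<lambda>(t, l). arc h t l) {x \<in> Idx. P (arc h (fst x) (snd x))}"
    using arc_inj[OF h] by (rule inj_on_subset) auto
  ultimately show ?thesis by (simp add: card_image)
qed

lemma Idx_list: "Idx = set (List.product [0..<6] [0..<6])" unfolding Idx_def by auto

lemma hex_counts:
  fixes h :: "nat \<Rightarrow> 'b"
  assumes h: "inj_on h {..<6}"
  shows "card (Subv (hexG h) (h 0)) = 21" "card (Subn (hexG h) (h 0)) = 15"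
    "card (Subv (hexG h) (h 3)) = 21" "card (Subn (hexG h) (h 3)) = 15"
    "card {T \<in> Subv (hexG h) (h 0). h 1 \<in> fst T} = 16"
    "card {T \<in> Subv (hexG h) (h 0). h 2 \<in> fst T} = 13"
    "card {T \<in> Subv (hexG h) (h 0). h 3 \<in> fst T} = 12"
    "card {T \<in> Subn (hexG h) (h 0). h 1 \<in> fst T} = 5"
    "card {T \<in> Subn (hexG h) (h 0). h 2 \<in> fst T} = 8"
    "card {T \<in> Subn (hexG h) (h 0). h 3 \<in> fst T} = 9"
proof -
  have m: "\<And>p t l. p < 6 \<Longrightarrow> h p \<in> fst (arc h t l) \<longleftrightarrow> p \<in> fst (arcI t l)" using arc_mem[OF h] by blast
  have c1: "card {x \<in> set (List.product [0..<6] [0..<6]). (0::nat) \<in> fst (arcI (fst x) (snd x))} = 21" by code_simp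
  have c2: "card {x \<in> set (List.product [0..<6] [0..<6]). (0::nat) \<notin> fst (arcI (fst x) (snd x))} = 15" by code_simp
  have c3: "card {x \<in> set (List.product [0..<6] [0..<6]). (3::nat) \<in> fst (arcI (fst x) (snd x))} = 21" by code_simp
  have c4: "card {x \<in> set (List.product [0..<6] [0..<6]). (3::nat) \<notin> fst (arcI (fst x) (snd x))} = 15" by code_simp
  have c5: "card {x \<in> set (List.product [0..<6] [0..<6]). (0::nat) \<in> fst (arcI (fst x) (snd x)) \<and> 1 \<in> fst (arcI (fst x) (snd x))} = 16" by code_simp
  have c6: "card {x \<in> set (List.product [0..<6] [0..<6]). (0::nat) \<in> fst (arcI (fst x) (snd x)) \<and> 2 \<in> fst (arcI (fst x) (snd x))} = 13" by code_simp
  have c7: "card {x \<in> set (List.product [0..<6] [0..<6]). (0::nat) \<in> fst (arcI (fst x) (snd x)) \<and> 3 \<in> fst (arcI (fst x) (snd x))} = 12" by code_simp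
  have c8: "card {x \<in> set (List.product [0..<6] [0..<6]). (0::nat) \<notin> fst (arcI (fst x) (snd x)) \<and> 1 \<in> fst (arcI (fst x) (snd x))} = 5" by code_simp
  have c9: "card {x \<in> set (List.product [0..<6] [0..<6]). (0::nat) \<notin> fst (arcI (fst x) (snd x)) \<and> 2 \<in> fst (arcI (fst x) (snd x))} = 8" by code_simp
  have c10: "card {x \<in> set (List.product [0..<6] [0..<6]). (0::nat) \<notin> fst (arcI (fst x) (snd x)) \<and> 3 \<in> fst (arcI (fst x) (snd x))} = 9" by code_simp
  have e: "\<And>P. {T \<in> Subv (hexG h) (h p). P T} = {T \<in> Sub (hexG h). h p \<in> fst T \<and> P T}"
          "\<And>P. {T \<in> Subn (hexG h) (h p). P T} = {T \<in> Sub (hexG h). h p \<notin> fst T \<and> P T}" for p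
    unfolding Subv_def Subn_def by auto
  have e2: "Subv (hexG h) (h p) = {T \<in> Sub (hexG h). h p \<in> fst T}" "Subn (hexG h) (h p) = {T \<in> Sub (hexG h). h p \<notin> fst T}" for p
    unfolding Subv_def Subn_def by auto
  have k2: "card {T \<in> Sub (hexG h). Q (h 0 \<in> fst T) (h 1 \<in> fst T) (h 2 \<in> fst T) (h 3 \<in> fst T)} =
    card {x \<in> set (List.product [0..<6] [0..<6]). Q (0 \<in> fst (arcI (fst x) (snd x))) (1 \<in> fst (arcI (fst x) (snd x)))
      (2 \<in> fst (arcI (fst x) (snd x))) (3 \<in> fst (arcI (fst x) (snd x)))}" for Q
    unfolding card_hex[OF h] Idx_list[symmetric] using m[of 0] m[of 1] m[of 2] m[of 3] by simp
  show "card (Subv (hexG h) (h 0)) = 21" using k2[of "\<lambda>a b c d. a"] c1 unfolding e2 by simp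
  show "card (Subn (hexG h) (h 0)) = 15" using k2[of "\<lambda>a b c d. \<not> a"] c2 unfolding e2 by simp
  show "card (Subv (hexG h) (h 3)) = 21" using k2[of "\<lambda>a b c d. d"] c3 unfolding e2 by simp
  show "card (Subn (hexG h) (h 3)) = 15" using k2[of "\<lambda>a b c d. \<not> d"] c4 unfolding e2 by simp
  show "card {T \<in> Subv (hexG h) (h 0). h 1 \<in> fst T} = 16" using k2[of "\<lambda>a b c d. a \<and> b"] c5 unfolding e by simp
  show "card {T \<in> Subv (hexG h) (h 0). h 2 \<in> fst T} = 13" using k2[of "\<lambda>a b c d. a \<and> c"] c6 unfolding e by simp
  show "card {T \<in> Subv (hexG h) (h 0). h 3 \<in> fst T} = 12" using k2[of "\<lambda>a b c d. a \<and> d"] c7 unfolding e by simp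
  show "card {T \<in> Subn (hexG h) (h 0). h 1 \<in> fst T} = 5" using k2[of "\<lambda>a b c d. \<not> a \<and> b"] c8 unfolding e by simp
  show "card {T \<in> Subn (hexG h) (h 0). h 2 \<in> fst T} = 8" using k2[of "\<lambda>a b c d. \<not> a \<and> c"] c9 unfolding e by simp
  show "card {T \<in> Subn (hexG h) (h 0). h 3 \<in> fst T} = 9" using k2[of "\<lambda>a b c d. \<not> a \<and> d"] c10 unfolding e by simp
qed



lemma vtx_inj:
  assumes "1 \<le> i"
  shows "inj_on (spiro_vtx cs i) {..<6}"
proof (rule inj_onI)
  fix x y assume "x \<in> {..<6}" "y \<in> {..<6}" and eq: "spiro_vtx cs i x = spiro_vtx cs i y"
  have ne: "i - 1 \<noteq> i" using assms(1) by simp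
  show "x = y" using eq ne unfolding spiro_vtx_def
    by (cases "x = 0"; cases "y = 0"; cases "2 \<le> i") simp_all
qed

lemma comp_Union: "{f i k | i k. 1 \<le> i \<and> i \<le> (n::nat) \<and> (k::nat) < 6} = (\<Union>i\<in>{1..n}. f i ` {..<6})"
  by fastforce

lemma chain_alt: "spiro_chain n cs = (\<Union>i\<in>{1..n}. fst (hexG (spiro_vtx cs i)), \<Union>i\<in>{1..n}. snd (hexG (spiro_vtx cs i)))"
proof -
  have A: "{spiro_vtx cs i k | i k. 1 \<le> i \<and> i \<le> n \<and> k < 6} = (\<Union>i\<in>{1..n}. spiro_vtx cs i ` {..<6})"
    by (rule comp_Union)
  have B: "{{spiro_vtx cs i k, spiro_vtx cs i ((k + 1) mod 6)} | i k. 1 \<le> i \<and> i \<le> n \<and> k < 6}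
     = (\<Union>i\<in>{1..n}. (\<lambda>k. {spiro_vtx cs i k, spiro_vtx cs i ((k + 1) mod 6)}) ` {..<6})"
    by (rule comp_Union[where f = "\<lambda>i k. {spiro_vtx cs i k, spiro_vtx cs i ((k + 1) mod 6)}"])
  show ?thesis unfolding spiro_chain_def hexG_def edg_def A B by simp
qed

lemma chain_Suc: "spiro_chain (Suc n) cs = (fst (spiro_chain n cs) \<union> fst (hexG (spiro_vtx cs (Suc n))),
    snd (spiro_chain n cs) \<union> snd (hexG (spiro_vtx cs (Suc n))))"
proof -
  have "{1..Suc n} = {1..n} \<union> {Suc n}" by auto
  then show ?thesis unfolding chain_alt by auto
qed

lemma chain_1: "spiro_chain 1 cs = hexG (spiro_vtx cs 1)"
  unfolding chain_alt by simp

lemma chain_finite: "finite (fst (spiro_chain n cs))" "finite (snd (spiro_chain n cs))"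
  unfolding chain_alt hexG_def by auto

lemma chain_fst_le: "x \<in> fst (spiro_chain n cs) \<Longrightarrow> fst x \<le> n"
  unfolding chain_alt hexG_def spiro_vtx_def by (auto split: if_splits)

lemma hex_vtx:
  assumes "1 \<le> n"
  shows "spiro_vtx cs (Suc n) k = (if k = 0 then (n, outpos cs n) else (Suc n, k))"
  using assms unfolding spiro_vtx_def by auto

lemma chain_glue:
  assumes n: "1 \<le> n" and op: "outpos cs n \<in> {1,2,3}"
  shows "glue (fst (spiro_chain n cs)) (fst (hexG (spiro_vtx cs (Suc n))))
     (snd (spiro_chain n cs)) (snd (hexG (spiro_vtx cs (Suc n)))) (n, outpos cs n)"
proof
  fix e assume "e \<in> snd (spiro_chain n cs)"
  then show "e \<subseteq> fst (spiro_chain n cs)" unfolding chain_alt hexG_def edg_def by auto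
next
  fix e assume "e \<in> snd (hexG (spiro_vtx cs (Suc n)))"
  then show "e \<subseteq> fst (hexG (spiro_vtx cs (Suc n)))" unfolding hexG_def edg_def by auto
next
  have vin: "(n, outpos cs n) \<in> fst (spiro_chain n cs)"
  proof -
    have "spiro_vtx cs n (outpos cs n) = (n, outpos cs n)" using op unfolding spiro_vtx_def by auto
    moreover have "outpos cs n \<in> {..<6}" using op by auto
    ultimately show ?thesis unfolding chain_alt hexG_def using n by force
  qed
  have six: "{..<6::nat} = insert 0 {1..<6}" by auto
  have ic: "(\<lambda>k. if k = 0 then (n, outpos cs n) else (Suc n, k)) ` {1..<6} = (\<lambda>k. (Suc n, k)) ` {1..<6}"
    by (rule image_cong) auto
  have "fst (hexG (spiro_vtx cs (Suc n))) = insert (n, outpos cs n) ((\<lambda>k. (Suc n, k)) ` {1..<6})"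
    unfolding hexG_def hex_vtx[OF n] fst_conv six image_insert ic by simp
  then have H: "fst (hexG (spiro_vtx cs (Suc n))) = insert (n, outpos cs n) (Pair (Suc n) ` {1..<6})" by simp
  show "fst (spiro_chain n cs) \<inter> fst (hexG (spiro_vtx cs (Suc n))) = {(n, outpos cs n)}"
  proof (rule equalityI)
    show "{(n, outpos cs n)} \<subseteq> fst (spiro_chain n cs) \<inter> fst (hexG (spiro_vtx cs (Suc n)))"
      using vin H by simp
  next
    show "fst (spiro_chain n cs) \<inter> fst (hexG (spiro_vtx cs (Suc n))) \<subseteq> {(n, outpos cs n)}"
    proof
      fix x assume x: "x \<in> fst (spiro_chain n cs) \<inter> fst (hexG (spiro_vtx cs (Suc n)))"
      then have "fst x \<le> n" using chain_fst_le by blast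
      moreover have "x = (n, outpos cs n) \<or> x \<in> Pair (Suc n) ` {1..<6}" using x H by blast
      ultimately show "x \<in> {(n, outpos cs n)}" by auto
    qed
  qed
next
  fix e assume "e \<in> snd (spiro_chain n cs) \<union> snd (hexG (spiro_vtx cs (Suc n)))"
  then obtain i k where ik: "1 \<le> i" "k < 6" "e = edg (spiro_vtx cs i) k"
    unfolding chain_alt hexG_def by auto
  have "k \<noteq> Suc k mod 6" "Suc k mod 6 < 6" using ik(2) by (auto simp: mod_Suc)
  then have "spiro_vtx cs i k \<noteq> spiro_vtx cs i (Suc k mod 6)"
    using inj_onD[OF vtx_inj[OF ik(1)], of cs k "Suc k mod 6"] ik(2) by auto
  then show "\<exists>x y. x \<noteq> y \<and> e = {x, y}" using ik(3) unfolding edg_def by blast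
qed

lemma STN_Sub: "STN G = card (Sub G)" unfolding STN_def Sub_def by simp

lemma R1:
  assumes n: "1 \<le> n" and op: "outpos cs n \<in> {1,2,3}"
  shows "STN (spiro_chain (Suc n) cs) = STN (spiro_chain n cs) + 20 * card (Subv (spiro_chain n cs) (n, outpos cs n)) + 15"
proof -
  interpret g: glue "fst (spiro_chain n cs)" "fst (hexG (spiro_vtx cs (Suc n)))"
     "snd (spiro_chain n cs)" "snd (hexG (spiro_vtx cs (Suc n)))" "(n, outpos cs n)"
    using chain_glue[OF n op] .
  have h: "inj_on (spiro_vtx cs (Suc n)) {..<6}" by (rule vtx_inj) simp
  have h0: "spiro_vtx cs (Suc n) 0 = (n, outpos cs n)" using hex_vtx[OF n] by simp
  have fin: "finite (fst (hexG (spiro_vtx cs (Suc n))))" "finite (snd (hexG (spiro_vtx cs (Suc n))))"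
    unfolding hexG_def by auto
  have "STN (spiro_chain (Suc n) cs) = card (Subn (spiro_chain n cs) (n, outpos cs n)) + 15
     + card (Subv (spiro_chain n cs) (n, outpos cs n)) * 21"
    unfolding STN_Sub chain_Suc
    using g.card_glue[OF chain_finite(1) fin(1) chain_finite(2) fin(2)] hex_counts(1,2)[OF h] unfolding h0 prod.collapse by simp
  moreover have "STN (spiro_chain n cs) = card (Subv (spiro_chain n cs) (n, outpos cs n)) + card (Subn (spiro_chain n cs) (n, outpos cs n))"
    unfolding STN_Sub by (rule card_split[OF chain_finite])
  ultimately show ?thesis by simp
qed

definition ca :: "nat \<Rightarrow> nat" where "ca c = (if c = 1 then 5 else if c = 2 then 8 else 9)"
definition cb :: "nat \<Rightarrow> nat" where "cb c = (if c = 1 then 16 else if c = 2 then 13 else 12)"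

lemma R2:
  assumes n: "1 \<le> n" and op: "outpos cs n \<in> {1,2,3}" and c: "c \<in> {1,2,3}"
  shows "card {T \<in> Sub (spiro_chain (Suc n) cs). (Suc n, c) \<in> fst T} = ca c + cb c * card (Subv (spiro_chain n cs) (n, outpos cs n))"
proof -
  interpret g: glue "fst (spiro_chain n cs)" "fst (hexG (spiro_vtx cs (Suc n)))"
     "snd (spiro_chain n cs)" "snd (hexG (spiro_vtx cs (Suc n)))" "(n, outpos cs n)"
    using chain_glue[OF n op] .
  have h: "inj_on (spiro_vtx cs (Suc n)) {..<6}" by (rule vtx_inj) simp
  have h0: "spiro_vtx cs (Suc n) 0 = (n, outpos cs n)" using hex_vtx[OF n] by simp
  have hc: "spiro_vtx cs (Suc n) c = (Suc n, c)" using hex_vtx[OF n] c by auto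
  have fin: "finite (fst (hexG (spiro_vtx cs (Suc n))))" "finite (snd (hexG (spiro_vtx cs (Suc n))))"
    unfolding hexG_def by auto
  have w: "(Suc n, c) \<in> fst (hexG (spiro_vtx cs (Suc n)))" "(Suc n, c) \<noteq> (n, outpos cs n)"
    unfolding hexG_def using hc[symmetric] c by auto
  have "card {T \<in> Sub (spiro_chain (Suc n) cs). (Suc n, c) \<in> fst T} =
     card {T \<in> Subn (hexG (spiro_vtx cs (Suc n))) (spiro_vtx cs (Suc n) 0). spiro_vtx cs (Suc n) c \<in> fst T}
     + card (Subv (spiro_chain n cs) (n, outpos cs n)) *
       card {T \<in> Subv (hexG (spiro_vtx cs (Suc n))) (spiro_vtx cs (Suc n) 0). spiro_vtx cs (Suc n) c \<in> fst T}"
    unfolding chain_Suc using g.card_glue_w[OF chain_finite(1) fin(1) chain_finite(2) fin(2) w] unfolding h0 hc prod.collapse by simp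
  then show ?thesis using c hex_counts(5-10)[OF h] unfolding ca_def cb_def by auto
qed

lemma vtx_append:
  assumes "i \<le> n" "n - 2 \<le> length cs"
  shows "spiro_vtx (cs @ ds) i k = spiro_vtx cs i k"
proof -
  have "outpos (cs @ ds) (i - 1) = outpos cs (i - 1)" if "2 \<le> i"
  proof (cases "i - 1 = 1")
    case True then show ?thesis unfolding outpos_def by simp
  next
    case False
    then have "i - 1 - 2 < length cs" using assms that by linarith
    then show ?thesis unfolding outpos_def using False by (simp add: nth_append)
  qed
  then show ?thesis unfolding spiro_vtx_def by simp
qed

lemma chain_append:
  assumes "n - 2 \<le> length cs"
  shows "spiro_chain n (cs @ ds) = spiro_chain n cs"
proof -
  have "\<And>i. i \<in> {1..n} \<Longrightarrow> spiro_vtx (cs @ ds) i = spiro_vtx cs i"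
    using vtx_append assms by auto
  then show ?thesis unfolding chain_alt by (metis (no_types, lifting) SUP_cong)
qed



definition LL :: "nat \<Rightarrow> nat list set" where "LL k = {xs. set xs \<subseteq> {1,2,3} \<and> length xs = k}"

definition FF :: "nat \<Rightarrow> nat list \<Rightarrow> nat" where
  "FF n cs = card (Subv (spiro_chain n cs) (n, outpos cs n))"

lemma LL_finite: "finite (LL k)" unfolding LL_def by (rule finite_lists_length_eq) simp

lemma LL_card: "card (LL k) = 3 ^ k" unfolding LL_def by (subst card_lists_length_eq) (auto simp: numeral_3_eq_3)

lemma LL_Suc: "LL (Suc k) = (\<lambda>(cs, c). cs @ [c]) ` (LL k \<times> {1,2,3})"
proof (rule set_eqI, rule iffI)
  fix xs assume "xs \<in> LL (Suc k)"
  then have xs: "set xs \<subseteq> {1,2,3}" "length xs = Suc k" unfolding LL_def by auto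
  then have "xs \<noteq> []" by auto
  then have e: "xs = butlast xs @ [last xs]" by simp
  have "set (butlast xs) \<subseteq> {1,2,3}" using xs by (auto dest: in_set_butlastD)
  moreover have "last xs \<in> {1,2,3}" using xs(1) last_in_set[OF \<open>xs \<noteq> []\<close>] by blast
  moreover have "length (butlast xs) = k" using xs by simp
  ultimately have "(butlast xs, last xs) \<in> LL k \<times> {1,2,3}" unfolding LL_def by auto
  then show "xs \<in> (\<lambda>(cs, c). cs @ [c]) ` (LL k \<times> {1,2,3})" using e by force
next
  fix xs assume "xs \<in> (\<lambda>(cs, c). cs @ [c]) ` (LL k \<times> {1,2,3})"
  then show "xs \<in> LL (Suc k)" unfolding LL_def by auto
qed

lemma LL_inj: "inj_on (\<lambda>(cs, c). cs @ [c]) (LL k \<times> {1,2,3})"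
  by (rule inj_onI) auto

lemma sum_LL_Suc: "(\<Sum>cs\<in>LL (Suc k). g cs) = (\<Sum>cs\<in>LL k. \<Sum>c\<in>{1,2,3}. g (cs @ [c]))"
proof -
  have "(\<Sum>cs\<in>LL (Suc k). g cs) = (\<Sum>x\<in>LL k \<times> {1,2,3}. g ((\<lambda>(cs, c). cs @ [c]) x))"
    unfolding LL_Suc by (rule sum.reindex[OF LL_inj, unfolded comp_def])
  also have "\<dots> = (\<Sum>(cs, c)\<in>LL k \<times> {1,2,3}. g (cs @ [c]))"
    by (simp add: case_prod_unfold)
  also have "\<dots> = (\<Sum>cs\<in>LL k. \<Sum>c\<in>{1,2,3}. g (cs @ [c]))"
    by (rule sum.cartesian_product[symmetric])
  finally show ?thesis .
qed

lemma outpos_last: "length cs = k \<Longrightarrow> outpos (cs @ [c]) (k + 2) = c"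
  unfolding outpos_def by (simp add: nth_append)

lemma stepS:
  assumes "cs \<in> LL k" "c \<in> {1,2,3}"
  shows "STN (spiro_chain (k + 3) (cs @ [c])) = STN (spiro_chain (k + 2) cs) + 20 * FF (k + 2) (cs @ [c]) + 15"
proof -
  have l: "length cs = k" using assms unfolding LL_def by auto
  have op: "outpos (cs @ [c]) (k + 2) \<in> {1,2,3}" using outpos_last[OF l] assms by simp
  have "STN (spiro_chain (Suc (k + 2)) (cs @ [c])) = STN (spiro_chain (k + 2) (cs @ [c])) + 20 * FF (k + 2) (cs @ [c]) + 15"
    unfolding FF_def by (rule R1[OF _ op]) simp
  moreover have "spiro_chain (k + 2) (cs @ [c]) = spiro_chain (k + 2) cs" using l by (intro chain_append) simp
  ultimately show ?thesis by (simp add: numeral_3_eq_3)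
qed

lemma stepF:
  assumes "cs \<in> LL k" "c \<in> {1,2,3}" "d \<in> {1,2,3}"
  shows "FF (k + 3) (cs @ [c] @ [d]) = ca d + cb d * FF (k + 2) (cs @ [c])"
proof -
  have l: "length cs = k" using assms unfolding LL_def by auto
  have op: "outpos (cs @ [c]) (k + 2) \<in> {1,2,3}" using outpos_last[OF l] assms by simp
  have od: "outpos ((cs @ [c]) @ [d]) (k + 3) = d" using l unfolding outpos_def by (simp add: nth_append)
  have ch: "spiro_chain (k + 3) ((cs @ [c]) @ [d]) = spiro_chain (k + 3) (cs @ [c])" using l by (intro chain_append) simp
  have "FF (k + 3) (cs @ [c] @ [d]) = card {T \<in> Sub (spiro_chain (Suc (k + 2)) (cs @ [c])). (Suc (k + 2), d) \<in> fst T}"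
    unfolding FF_def Subv_def using od ch by (simp add: numeral_3_eq_3)
  also have "\<dots> = ca d + cb d * FF (k + 2) (cs @ [c])"
    unfolding FF_def by (rule R2[OF _ op assms(3)]) simp
  finally show ?thesis .
qed

lemma base1: "STN (spiro_chain 1 cs) = 36" "FF 1 cs = 21"
proof -
  have h: "inj_on (spiro_vtx cs 1) {..<6}" by (rule vtx_inj) simp
  have h3: "spiro_vtx cs 1 3 = (1, 3)" unfolding spiro_vtx_def by simp
  have o: "outpos cs 1 = 3" unfolding outpos_def by simp
  have fin: "finite (fst (hexG (spiro_vtx cs 1)))" "finite (snd (hexG (spiro_vtx cs 1)))"
    unfolding hexG_def by auto
  show "STN (spiro_chain 1 cs) = 36"
    unfolding STN_Sub chain_1 card_split[OF fin, of "spiro_vtx cs 1 3"] hex_counts(3,4)[OF h] by simp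
  show "FF 1 cs = 21" unfolding FF_def chain_1 o using hex_counts(3)[OF h] h3 by simp
qed

lemma base2: "STN (spiro_chain 2 []) = 471"
proof -
  have "STN (spiro_chain (Suc 1) []) = STN (spiro_chain 1 []) + 20 * FF 1 [] + 15"
    unfolding FF_def by (rule R1) (auto simp: outpos_def)
  then show ?thesis using base1 by (simp add: numeral_2_eq_2)
qed

lemma base2F: "c \<in> {1,2,3} \<Longrightarrow> FF 2 [c] = ca c + cb c * 21"
proof -
  assume c: "c \<in> {1,2,3}"
  have "card {T \<in> Sub (spiro_chain (Suc 1) [c]). (Suc 1, c) \<in> fst T} = ca c + cb c * FF 1 [c]"
    unfolding FF_def by (rule R2[OF _ _ c]) (auto simp: outpos_def)
  moreover have "outpos [c] 2 = c" unfolding outpos_def by simp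
  ultimately show ?thesis using base1(2)[of "[c]"] unfolding FF_def Subv_def by (simp add: numeral_2_eq_2)
qed

definition SS :: "nat \<Rightarrow> real" where
  "SS k = (\<Sum>cs\<in>LL k. real (STN (spiro_chain (k + 2) cs)))"
definition PP :: "nat \<Rightarrow> real" where
  "PP k = (\<Sum>cs\<in>LL k. \<Sum>c\<in>{1,2,3}. real (FF (k + 2) (cs @ [c])))"

lemma sum3: "(\<Sum>c\<in>{1::nat,2,3}. f c) = f 1 + f 2 + (f 3 :: real)" by (simp add: add.assoc)

lemma SS_Suc: "SS (Suc k) = 3 * SS k + 20 * PP k + 45 * 3 ^ k"
proof -
  have "SS (Suc k) = (\<Sum>cs\<in>LL k. \<Sum>c\<in>{1,2,3}. real (STN (spiro_chain (k + 3) (cs @ [c]))))"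
    unfolding SS_def sum_LL_Suc by (simp add: numeral_3_eq_3 numeral_2_eq_2)
  also have "\<dots> = (\<Sum>cs\<in>LL k. \<Sum>c\<in>{1,2,3}. (real (STN (spiro_chain (k + 2) cs)) + 20 * real (FF (k + 2) (cs @ [c])) + 15))"
  proof (intro sum.cong refl)
    fix cs c assume "cs \<in> LL k" "c \<in> {1::nat,2,3}"
    then show "real (STN (spiro_chain (k + 3) (cs @ [c]))) = real (STN (spiro_chain (k + 2) cs)) + 20 * real (FF (k + 2) (cs @ [c])) + 15"
      using stepS by simp
  qed
  also have "\<dots> = (\<Sum>cs\<in>LL k. 3 * real (STN (spiro_chain (k + 2) cs)) + 20 * (\<Sum>c\<in>{1,2,3}. real (FF (k + 2) (cs @ [c]))) + 45)"
    by (intro sum.cong refl) (simp add: sum3)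
  also have "\<dots> = 3 * SS k + 20 * PP k + 45 * real (card (LL k))"
    unfolding SS_def PP_def by (simp add: sum.distrib sum_distrib_left)
  finally show ?thesis using LL_card by simp
qed

lemma PP_Suc: "PP (Suc k) = 66 * 3 ^ k + 41 * PP k"
proof -
  have "PP (Suc k) = (\<Sum>cs\<in>LL k. \<Sum>c\<in>{1,2,3}. \<Sum>d\<in>{1,2,3}. real (FF (k + 3) (cs @ [c] @ [d])))"
    unfolding PP_def sum_LL_Suc by (simp add: numeral_3_eq_3 numeral_2_eq_2)
  also have "\<dots> = (\<Sum>cs\<in>LL k. \<Sum>c\<in>{1,2,3}. \<Sum>d\<in>{1,2,3}. real (ca d) + real (cb d) * real (FF (k + 2) (cs @ [c])))"
  proof (intro sum.cong refl)
    fix cs c d assume "cs \<in> LL k" "c \<in> {1::nat,2,3}" "d \<in> {1::nat,2,3}"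
    then show "real (FF (k + 3) (cs @ [c] @ [d])) = real (ca d) + real (cb d) * real (FF (k + 2) (cs @ [c]))"
      using stepF by (metis of_nat_add of_nat_mult)
  qed
  also have "\<dots> = (\<Sum>cs\<in>LL k. 66 + 41 * (\<Sum>c\<in>{1,2,3}. real (FF (k + 2) (cs @ [c]))))"
    by (intro sum.cong refl) (simp add: sum3 ca_def cb_def algebra_simps)
  also have "\<dots> = 66 * real (card (LL k)) + 41 * PP k"
    unfolding PP_def by (simp add: sum.distrib sum_distrib_left)
  finally show ?thesis using LL_card by simp
qed

lemma SS0: "SS 0 = 471" and PP0: "PP 0 = 883"
proof -
  have L0: "LL 0 = {[]}" unfolding LL_def by auto
  show "SS 0 = 471" unfolding SS_def L0 using base2 by (simp add: numeral_2_eq_2)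
  have "FF 2 [1] = 341" "FF 2 [2] = 281" "FF 2 [3] = 261" using base2F[of 1] base2F[of 2] base2F[of 3]
    by (simp_all add: ca_def cb_def)
  then show "PP 0 = 883" unfolding PP_def L0 sum3 by (simp add: numeral_2_eq_2)
qed

lemma closed:
  "PP k = 3 ^ k * (16810 / 19 * (41 / 3) ^ k - 33 / 19) \<and>
   SS k = 3 ^ k * (900 / 361 * (41 / 3) ^ (k + 2) + 130 / 38 * real (k + 2) - 539 / 361)"
proof (induction k)
  case 0
  then show ?case using SS0 PP0 by simp
next
  case (Suc k)
  then have P: "PP k = 3 ^ k * (16810 / 19 * (41 / 3) ^ k - 33 / 19)"
    and S: "SS k = 3 ^ k * (900 / 361 * (41 / 3) ^ (k + 2) + 130 / 38 * real (k + 2) - 539 / 361)" by auto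
  have "PP (Suc k) = 3 ^ Suc k * (16810 / 19 * (41 / 3) ^ Suc k - 33 / 19)"
    unfolding PP_Suc P by (simp add: field_simps)
  moreover have "SS (Suc k) = 3 ^ Suc k * (900 / 361 * (41 / 3) ^ (Suc k + 2) + 130 / 38 * real (Suc k + 2) - 539 / 361)"
    unfolding SS_Suc P S by (simp add: field_simps)
  ultimately show ?case by simp
qed

theorem theorem8:
  fixes n :: nat
  assumes "n \<ge> 1"
  shows "STN_avr n = 900 / 361 * (41 / 3) ^ n + 130 / 38 * real n - 539 / 361"
proof (cases "n = 1")
  case True
  have "spiro_choices 1 = {[]}" unfolding spiro_choices_def by auto
  then have "STN_avr 1 = 36" unfolding STN_avr_def using base1(1)[of "[]"] by simp
  moreover have "(900 / 361 * (41 / 3) ^ 1 + 130 / 38 * real 1 - 539 / 361 :: real) = 36" by simp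
  ultimately show ?thesis using True by simp
next
  case False
  define k where "k = n - 2"
  have k: "n = k + 2" using assms False unfolding k_def by simp
  have "spiro_choices n = LL k" unfolding spiro_choices_def LL_def k by auto
  then have "STN_avr n = SS k / 3 ^ k" unfolding STN_avr_def SS_def k using LL_card[of k] by simp
  then show ?thesis using closed[of k] k by simp
qed


end
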